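(* Let $d\ge1$. There is $\kappa>0$, depending only on $d$, such that the following holds. Let $N\ge1$ be an integer and $p\in(1-\kappa,1]$, and let $\tilde{\mathbb{P}}$ assign to each vertex $i$ of the graph $\Xi$ (defined in the context) a value $\eta(i)\in\{0,1\}$, independently, with $\tilde{\mathbb{P}}(\eta(i)=1)=p$. Then there are constants $\varphi>0$ and $c_1,c_2>0$, depending only on $p$ and $d$, such that \[ \tilde{\mathbb{P}}\bigl(T(x)<\varphi\|x\|\bigr)\le c_1e^{-c_2\|x\|}\qquad\text{for all }x\in\mathcal{A}. \]
   Context: $\mathcal{A}=\{(x_1,\dots,x_d)\in\mathbb{Z}^d:x_1+\dots+x_d\equiv0\pmod2\}$ is the even sublattice. $\Xi=\mathcal{A}\times\{0,\dots,N-1\}$ is a graph in which $(x,k)$ and $(y,\ell)$ are adjacent if either $x=y$ and $k=\ell\pm1$ (mod $N$), or $k=\ell$ and $x,y$ are next-nearest neighbours in $\mathbb{Z}^d$ (i.e. distinct points at graph distance 2 in $\mathbb{Z}^d$). For $x\in\mathcal{A}$, the passage time is $T(x)=\inf_\pi\sum_{i\in\pi}\eta(i)$, the infimum over all paths $\pi$ in $\Xi$ from $(0,0)$ to $(x,0)$. $\|x\|$ is the (Euclidean) norm. *)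

theory Defs
  imports "HOL-Probability.Probability"
begin

definition evenlat :: "nat \<Rightarrow> int list set" where
  "evenlat d = {x. length x = d \<and> even (sum_list x)}"

definition l1dist :: "int list \<Rightarrow> int list \<Rightarrow> int" where
  "l1dist x y = sum_list (map (\<lambda>(a, b). \<bar>a - b\<bar>) (zip x y))"

text \<open>Vertex set of the graph Xi = A x {0,...,N-1}.\<close>
definition Xi_V :: "nat \<Rightarrow> nat \<Rightarrow> (int list \<times> nat) set" where
  "Xi_V d N = evenlat d \<times> {..<N}"

definition Xi_adj :: "nat \<Rightarrow> int list \<times> nat \<Rightarrow> int list \<times> nat \<Rightarrow> bool" where
  "Xi_adj N i j = (case i of (x, k) \<Rightarrow> case j of (y, l) \<Rightarrow>
      (x = y \<and> (k = (l + 1) mod N \<or> l = (k + 1) mod N))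
    \<or> (k = l \<and> x \<noteq> y \<and> l1dist x y = 2))"

definition Xi_path :: "nat \<Rightarrow> nat \<Rightarrow> (int list \<times> nat) list \<Rightarrow> bool" where
  "Xi_path d N \<pi> = (\<pi> \<noteq> [] \<and> set \<pi> \<subseteq> Xi_V d N \<and>
      (\<forall>i. i + 1 < length \<pi> \<longrightarrow> Xi_adj N (\<pi> ! i) (\<pi> ! (i + 1))))"

text \<open>Passage time T(x): infimum over paths from (0,0) to (x,0) of the sum of eta
  over the vertices of the path; eta(i) = 1 iff the Boolean configuration is True at i.\<close>
definition passage_time ::
  "nat \<Rightarrow> nat \<Rightarrow> (int list \<times> nat \<Rightarrow> bool) \<Rightarrow> int list \<Rightarrow> real" where
  "passage_time d N \<eta> x = Inf {sum_list (map (\<lambda>i. if \<eta> i then 1 else 0) \<pi>) | \<pi>.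
      Xi_path d N \<pi> \<and> hd \<pi> = (replicate d 0, 0) \<and> last \<pi> = (x, 0)}"

definition eucl_norm :: "int list \<Rightarrow> real" where
  "eucl_norm x = sqrt (sum_list (map (\<lambda>a. (real_of_int a)\<^sup>2) x))"

definition config_measure :: "nat \<Rightarrow> nat \<Rightarrow> real \<Rightarrow> (int list \<times> nat \<Rightarrow> bool) measure" where
  "config_measure d N p = PiM (Xi_V d N) (\<lambda>_. measure_pmf (bernoulli_pmf p))"

end

theory Submission
  imports Defs
begin


definition l1n :: "int list \<Rightarrow> int" where "l1n x = sum_list (map abs x)"

lemma l1dist_Cons[simp]: "l1dist (a#x) (b#y) = \<bar>a-b\<bar> + l1dist x y"
  by (simp add: l1dist_def)
lemma l1dist_Nil[simp]: "l1dist [] y = 0" "l1dist x [] = 0"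
  by (simp_all add: l1dist_def)
lemma l1n_simps[simp]: "l1n [] = 0" "l1n (a#x) = \<bar>a\<bar> + l1n x"
  by (simp_all add: l1n_def)

lemma l1dist_self[simp]: "l1dist x x = 0"
  by (induction x) auto

lemma l1_tri: "length x = length y \<Longrightarrow> l1n y \<le> l1n x + l1dist x y"
  by (induction x y rule: list_induct2) auto

lemma l1dist_comp: "length x = length y \<Longrightarrow> (a,b) \<in> set (zip x y) \<Longrightarrow> \<bar>a-b\<bar> \<le> l1dist x y"
proof (induction x y rule: list_induct2)
  case (Cons u x v y)
  have "0 \<le> l1dist x y" by (auto simp: l1dist_def intro!: sum_list_nonneg)
  with Cons show ?case by auto
qed simp

lemma l1dist_nonneg: "0 \<le> l1dist x y" by (auto simp: l1dist_def intro!: sum_list_nonneg)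

lemma l1n_nonneg: "0 \<le> l1n x" by (induction x) auto

lemma l1n_replicate0[simp]: "l1n (replicate n 0) = 0" by (induction n) auto

lemma even_l1n: "even (l1n x) = even (sum_list x)"
  by (induction x) (auto simp: abs_if)

lemma parity_l1dist: "length y = length z \<Longrightarrow> even (sum_list y + sum_list z + l1dist y z)"
proof (induction y z rule: list_induct2)
  case (Cons a y b z)
  have "even (a + b + \<bar>a-b\<bar>)" by (auto simp: abs_if)
  then have "even ((a + b + \<bar>a-b\<bar>) + (sum_list y + sum_list z + l1dist y z))" using Cons by simp
  then show ?case by (simp add: algebra_simps)
qed simp

lemma eucl_le_l1: "eucl_norm x \<le> real_of_int (l1n x)"
proof (induction x)
  case Nil then show ?case by (simp add: eucl_norm_def)
next
  case (Cons a x)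
  let ?S = "sum_list (map (\<lambda>a. (real_of_int a)\<^sup>2) x)"
  have S0: "0 \<le> ?S" by (auto intro!: sum_list_nonneg)
  have "sqrt ((real_of_int a)\<^sup>2 + ?S) \<le> \<bar>real_of_int a\<bar> + sqrt ?S"
  proof (rule real_le_lsqrt)
    show "0 \<le> \<bar>real_of_int a\<bar> + sqrt ?S" using S0 by simp
    have "0 \<le> \<bar>real_of_int a\<bar> * sqrt ?S" using S0 by simp
    then show "(real_of_int a)\<^sup>2 + ?S \<le> (\<bar>real_of_int a\<bar> + sqrt ?S)\<^sup>2"
      using S0 by (simp add: power2_sum)
  qed
  then show ?case using Cons by (simp add: eucl_norm_def)
qed

lemma eucl_nonneg: "0 \<le> eucl_norm x" by (auto simp: eucl_norm_def intro!: sum_list_nonneg)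




definition rel :: "int list \<Rightarrow> int list \<Rightarrow> bool" where
  "rel y z = (length y = length z \<and> y \<noteq> z \<and> l1dist y z = 2)"

lemma rel_cons: "rel\<^sup>*\<^sup>* u v \<Longrightarrow> rel\<^sup>*\<^sup>* (a#u) (a#v)"
proof (induction rule: rtranclp_induct)
  case (step y z)
  have "rel (a#y) (a#z)" using step(2) by (simp add: rel_def)
  then show ?case using step(3) by simp
qed simp

lemma rel_head_nat: "rel\<^sup>*\<^sup>* (a#u) ((a + 2 * int n)#u) \<and> rel\<^sup>*\<^sup>* (a#u) ((a - 2 * int n)#u)"
proof (induction n)
  case (Suc n)
  have "rel ((a + 2 * int n)#u) ((a + 2 * int (Suc n))#u)"
       "rel ((a - 2 * int n)#u) ((a - 2 * int (Suc n))#u)" by (simp_all add: rel_def)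
  then show ?case using Suc by (meson rtranclp.rtrancl_into_rtrancl)
qed simp

lemma rel_head: "even (b - a) \<Longrightarrow> rel\<^sup>*\<^sup>* (a#u) (b#u)"
proof -
  assume "even (b - a)"
  then obtain k where k: "b - a = 2 * k" by (meson dvdE)
  show ?thesis
  proof (cases "k \<ge> 0")
    case True
    then have "b = a + 2 * int (nat k)" using k by simp
    then show ?thesis using rel_head_nat by metis
  next
    case False
    then have "b = a - 2 * int (nat (-k))" using k by simp
    then show ?thesis using rel_head_nat by metis
  qed
qed

lemma reach_all:
  "(even (sum_list y) \<longrightarrow> rel\<^sup>*\<^sup>* (replicate (length y) 0) y) \<and>
   (odd (sum_list y) \<longrightarrow> rel\<^sup>*\<^sup>* (1 # replicate (length y - 1) 0) y)"
proof (induction y)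
  case Nil then show ?case by simp
next
  case (Cons a ys)
  show ?case
  proof (intro conjI impI)
    assume ev: "even (sum_list (a#ys))"
    show "rel\<^sup>*\<^sup>* (replicate (length (a#ys)) 0) (a#ys)"
    proof (cases "even a")
      case True
      then have "even (sum_list ys)" using ev by simp
      then have "rel\<^sup>*\<^sup>* (0 # replicate (length ys) 0) (0#ys)" using Cons rel_cons by blast
      moreover have "rel\<^sup>*\<^sup>* (0#ys) (a#ys)" using True by (intro rel_head) simp
      ultimately show ?thesis by simp
    next
      case False
      then have od: "odd (sum_list ys)" using ev by simp
      then obtain y' ys' where ys: "ys = y' # ys'" by (cases ys) auto
      have "rel (0 # 0 # replicate (length ys') 0) (1 # 1 # replicate (length ys') 0)"
        by (simp add: rel_def)
      moreover have "rel\<^sup>*\<^sup>* (1 # 1 # replicate (length ys') 0) (1#ys)"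
        using Cons od rel_cons ys by fastforce
      moreover have "rel\<^sup>*\<^sup>* (1#ys) (a#ys)" using False by (intro rel_head) simp
      ultimately show ?thesis using ys by (simp add: converse_rtranclp_into_rtranclp)
    qed
  next
    assume od: "odd (sum_list (a#ys))"
    show "rel\<^sup>*\<^sup>* (1 # replicate (length (a#ys) - 1) 0) (a#ys)"
    proof (cases "even a")
      case False
      then have "even (sum_list ys)" using od by simp
      then have "rel\<^sup>*\<^sup>* (1 # replicate (length ys) 0) (1#ys)" using Cons rel_cons by blast
      moreover have "rel\<^sup>*\<^sup>* (1#ys) (a#ys)" using False by (intro rel_head) simp
      ultimately show ?thesis by simp
    next
      case True
      then have od': "odd (sum_list ys)" using od by simp
      then obtain y' ys' where ys: "ys = y' # ys'" by (cases ys) auto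
      have "rel (1 # 0 # replicate (length ys') 0) (0 # 1 # replicate (length ys') 0)"
        by (simp add: rel_def)
      moreover have "rel\<^sup>*\<^sup>* (0 # 1 # replicate (length ys') 0) (0#ys)"
        using Cons od' rel_cons ys by fastforce
      moreover have "rel\<^sup>*\<^sup>* (0#ys) (a#ys)" using True by (intro rel_head) simp
      ultimately show ?thesis using ys by (simp add: converse_rtranclp_into_rtranclp)
    qed
  qed
qed

lemma rtranclp_list:
  "R\<^sup>*\<^sup>* u v \<Longrightarrow> \<exists>\<pi>. \<pi> \<noteq> [] \<and> hd \<pi> = u \<and> last \<pi> = v \<and> (\<forall>i. i + 1 < length \<pi> \<longrightarrow> R (\<pi>!i) (\<pi>!(i+1)))"
proof (induction rule: rtranclp_induct)
  case base
  show ?case by (rule exI[of _ "[u]"]) simp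
next
  case (step y z)
  then obtain \<pi> where p: "\<pi> \<noteq> []" "hd \<pi> = u" "last \<pi> = y" "\<forall>i. i + 1 < length \<pi> \<longrightarrow> R (\<pi>!i) (\<pi>!(i+1))"
    by blast
  show ?case
  proof (rule exI[of _ "\<pi> @ [z]"], intro conjI allI impI)
    fix i assume i: "i + 1 < length (\<pi> @ [z])"
    show "R ((\<pi> @ [z]) ! i) ((\<pi> @ [z]) ! (i + 1))"
    proof (cases "i + 1 < length \<pi>")
      case True then show ?thesis using p(4) by (simp add: nth_append)
    next
      case False
      then have "i = length \<pi> - 1" using i by simp
      then show ?thesis using p step(2) False by (simp add: nth_append last_conv_nth)
    qed
  qed (use p in auto)
qed

lemma rel_preserve: "rel y z \<Longrightarrow> length y = length z \<and> (even (sum_list y) = even (sum_list z))"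
proof -
  assume r: "rel y z"
  then have "even (sum_list y + sum_list z + l1dist y z)" "l1dist y z = 2" "length y = length z"
    using parity_l1dist by (auto simp: rel_def)
  then show ?thesis by simp
qed

lemma path_exists:
  assumes "x \<in> evenlat d" "N \<ge> 1"
  shows "\<exists>\<pi>. Xi_path d N \<pi> \<and> hd \<pi> = (replicate d 0, 0) \<and> last \<pi> = (x, 0)"
proof -
  have ev: "even (sum_list x)" and len: "length x = d" using assms by (auto simp: evenlat_def)
  then have "rel\<^sup>*\<^sup>* (replicate d 0) x" using reach_all by blast
  then obtain \<pi> where p: "\<pi> \<noteq> []" "hd \<pi> = replicate d 0" "last \<pi> = x"
    "\<forall>i. i + 1 < length \<pi> \<longrightarrow> rel (\<pi>!i) (\<pi>!(i+1))" using rtranclp_list by metis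
  have inv: "i < length \<pi> \<Longrightarrow> length (\<pi>!i) = d \<and> even (sum_list (\<pi>!i))" for i
  proof (induction i)
    case 0 then show ?case using p by (simp add: hd_conv_nth[symmetric] sum_list_replicate)
  next
    case (Suc i)
    then show ?case using p(4) rel_preserve[of "\<pi>!i" "\<pi>!Suc i"] by simp
  qed
  show ?thesis
  proof (rule exI[of _ "map (\<lambda>y. (y, 0)) \<pi>"], intro conjI)
    show "Xi_path d N (map (\<lambda>y. (y, 0)) \<pi>)"
      unfolding Xi_path_def
    proof (intro conjI allI impI)
      show "map (\<lambda>y. (y, 0::nat)) \<pi> \<noteq> []" using p by simp
      show "set (map (\<lambda>y. (y, 0::nat)) \<pi>) \<subseteq> Xi_V d N"
        using inv assms(2) by (auto simp: Xi_V_def evenlat_def in_set_conv_nth)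
      fix i assume "i + 1 < length (map (\<lambda>y. (y, 0::nat)) \<pi>)"
      then show "Xi_adj N (map (\<lambda>y. (y, 0)) \<pi> ! i) (map (\<lambda>y. (y, 0)) \<pi> ! (i + 1))"
        using p(4) by (auto simp: Xi_adj_def rel_def)
    qed
  qed (use p in \<open>auto simp: hd_map last_map\<close>)
qed




lemma adj_cases:
  assumes "Xi_adj N v w" "v \<in> Xi_V d N" "w \<in> Xi_V d N"
  shows "(fst v = fst w \<and> (snd v = (snd w + 1) mod N \<or> snd w = (snd v + 1) mod N))
    \<or> (snd v = snd w \<and> fst v \<noteq> fst w \<and> l1dist (fst v) (fst w) = 2
         \<and> length (fst v) = d \<and> length (fst w) = d)"
  using assms by (cases v; cases w) (auto simp: Xi_adj_def Xi_V_def evenlat_def)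

lemma path_l1_bound:
  assumes "Xi_path d N \<pi>" "hd \<pi> = (replicate d 0, 0)"
  shows "i < length \<pi> \<Longrightarrow> l1n (fst (\<pi>!i)) \<le> 2 * int i"
proof (induction i)
  case 0 then show ?case using assms by (simp add: Xi_path_def hd_conv_nth[symmetric])
next
  case (Suc i)
  have adj: "Xi_adj N (\<pi>!i) (\<pi>!(i+1))" using assms(1) Suc.prems by (simp add: Xi_path_def)
  have in1: "\<pi>!i \<in> Xi_V d N" "\<pi>!(i+1) \<in> Xi_V d N" using assms(1) Suc.prems
    by (auto simp: Xi_path_def)
  have IH: "l1n (fst (\<pi>!i)) \<le> 2 * int i" using Suc by simp
  have "fst (\<pi> ! i) = fst (\<pi> ! (i + 1)) \<or> (l1dist (fst (\<pi> ! i)) (fst (\<pi> ! (i + 1))) = 2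
     \<and> length (fst (\<pi> ! i)) = length (fst (\<pi> ! (i + 1))))"
    using adj_cases[OF adj in1] by auto
  then show ?case
  proof
    assume "fst (\<pi> ! i) = fst (\<pi> ! (i + 1))"
    then show ?thesis using IH by simp
  next
    assume h: "l1dist (fst (\<pi> ! i)) (fst (\<pi> ! (i + 1))) = 2
     \<and> length (fst (\<pi> ! i)) = length (fst (\<pi> ! (i + 1)))"
    then show ?thesis using IH l1_tri[of "fst (\<pi> ! i)" "fst (\<pi> ! (i + 1))"] by simp
  qed
qed

lemma path_length_bound:
  assumes "Xi_path d N \<pi>" "hd \<pi> = (replicate d 0, 0)" "last \<pi> = (x, 0)"
  shows "l1n x \<le> 2 * (int (length \<pi>) - 1)"
proof -
  have ne: "\<pi> \<noteq> []" using assms by (simp add: Xi_path_def)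
  have "l1n (fst (\<pi> ! (length \<pi> - 1))) \<le> 2 * int (length \<pi> - 1)"
    using path_l1_bound[OF assms(1,2)] ne by simp
  moreover have "int (length \<pi> - 1) = int (length \<pi>) - 1" using ne by (simp add: of_nat_diff Suc_le_eq)
  ultimately show ?thesis using assms(3) ne by (simp add: last_conv_nth)
qed

definition ones :: "(int list \<times> nat \<Rightarrow> bool) \<Rightarrow> (int list \<times> nat) list \<Rightarrow> real" where
  "ones \<eta> \<pi> = sum_list (map (\<lambda>i. if \<eta> i then 1 else 0) \<pi>)"

lemma ones_simps[simp]: "ones \<eta> [] = 0" "ones \<eta> (a#\<pi>) = (if \<eta> a then 1 else 0) + ones \<eta> \<pi>"
  "ones \<eta> (\<pi>1 @ \<pi>2) = ones \<eta> \<pi>1 + ones \<eta> \<pi>2"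
  by (simp_all add: ones_def)

lemma ones_nonneg: "0 \<le> ones \<eta> \<pi>"
  by (induction \<pi>) auto

lemma ones_take: "ones \<eta> (take m \<pi>) \<le> ones \<eta> \<pi>"
proof -
  have "ones \<eta> \<pi> = ones \<eta> (take m \<pi>) + ones \<eta> (drop m \<pi>)"
    by (metis append_take_drop_id ones_simps(3))
  then show ?thesis using ones_nonneg[of \<eta> "drop m \<pi>"] by simp
qed

lemma ones_card:
  "distinct \<sigma> \<Longrightarrow> ones \<eta> \<sigma> + real (card {v \<in> set \<sigma>. \<not> \<eta> v}) = real (length \<sigma>)"
proof (induction \<sigma>)
  case (Cons a \<sigma>)
  have fin: "finite {v \<in> set \<sigma>. \<not> \<eta> v}" by simp
  have "a \<notin> {v \<in> set \<sigma>. \<not> \<eta> v}" using Cons by simp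
  moreover have "{v \<in> set (a#\<sigma>). \<not> \<eta> v} = (if \<eta> a then {v \<in> set \<sigma>. \<not> \<eta> v} else insert a {v \<in> set \<sigma>. \<not> \<eta> v})"
    by auto
  ultimately show ?case using Cons fin
    by (cases "\<eta> a") (auto simp: card_insert_disjoint)
qed simp

lemma cut_nth:
  assumes "i < j" "j < length \<pi>" "k < length (take (i+1) \<pi> @ drop (j+1) \<pi>)"
  shows "(take (i+1) \<pi> @ drop (j+1) \<pi>) ! k = (if k \<le> i then \<pi>!k else \<pi>!(k + j - i))"
proof -
  have l: "length (take (i+1) \<pi>) = i+1" using assms(1,2) by simp
  show ?thesis
  proof (cases "k \<le> i")
    case True then show ?thesis using l by (simp add: nth_append)
  next
    case False
    then have "(take (i+1) \<pi> @ drop (j+1) \<pi>) ! k = drop (j+1) \<pi> ! (k - (i+1))" using l by (simp add: nth_append)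
    also have "\<dots> = \<pi> ! (j + 1 + (k - (i+1)))" using assms(2) by (subst nth_drop) auto
    also have "j + 1 + (k - (i+1)) = k + j - i" using False by simp
    finally show ?thesis using False by simp
  qed
qed

lemma cut_loop:
  assumes p: "Xi_path d N \<pi>" and ij: "i < j" "j < length \<pi>" "\<pi>!i = \<pi>!j"
  defines "\<pi>' \<equiv> take (i+1) \<pi> @ drop (j+1) \<pi>"
  shows "Xi_path d N \<pi>' \<and> hd \<pi>' = hd \<pi> \<and> last \<pi>' = last \<pi> \<and> ones \<eta> \<pi>' \<le> ones \<eta> \<pi>
     \<and> length \<pi>' < length \<pi>"
proof (intro conjI)
  have len: "length \<pi>' = i + 1 + (length \<pi> - (j+1))" using ij by (simp add: \<pi>'_def)
  have nth: "k < length \<pi>' \<Longrightarrow> \<pi>' ! k = (if k \<le> i then \<pi>!k else \<pi>!(k + j - i))" for k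
    using cut_nth[OF ij(1,2)] by (simp add: \<pi>'_def)
  show "length \<pi>' < length \<pi>" using len ij by simp
  show "Xi_path d N \<pi>'" unfolding Xi_path_def
  proof (intro conjI allI impI)
    show "\<pi>' \<noteq> []" using len by auto
    have "set \<pi>' \<subseteq> set \<pi>" unfolding \<pi>'_def
      using set_take_subset[of "i+1" \<pi>] set_drop_subset[of "j+1" \<pi>] by auto
    then show "set \<pi>' \<subseteq> Xi_V d N" using p unfolding Xi_path_def by blast
    fix k assume k: "k + 1 < length \<pi>'"
    have adjp: "\<And>t. t + 1 < length \<pi> \<Longrightarrow> Xi_adj N (\<pi>!t) (\<pi>!(t+1))" using p by (simp add: Xi_path_def)
    show "Xi_adj N (\<pi>' ! k) (\<pi>' ! (k + 1))"
    proof (cases "k < i")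
      case True then show ?thesis using nth[of k] nth[of "k+1"] k adjp[of k] ij by simp
    next
      case False
      show ?thesis
      proof (cases "k = i")
        case True
        then have "\<pi>'!k = \<pi>!j" "\<pi>'!(k+1) = \<pi>!(j+1)" using nth[of k] nth[of "k+1"] k ij by auto
        moreover have "j + 1 < length \<pi>" using k len True by simp
        ultimately show ?thesis using adjp[of j] by simp
      next
        case False
        have e: "k + 1 + j - i = k + j - i + 1" using \<open>\<not> k < i\<close> by simp
        have "\<pi>'!k = \<pi>!(k+j-i)" using nth[of k] k False \<open>\<not> k < i\<close> by auto
        moreover have "\<pi>'!(k+1) = \<pi>!(k+j-i+1)" using nth[of "k+1"] k False \<open>\<not> k < i\<close> e by auto
        ultimately have "\<pi>'!k = \<pi>!(k+j-i)" "\<pi>'!(k+1) = \<pi>!(k+j-i+1)" by auto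
        moreover have "k+j-i + 1 < length \<pi>" using k len False \<open>\<not> k < i\<close> by simp
        ultimately show ?thesis using adjp[of "k+j-i"] by simp
      qed
    qed
  qed
  show "hd \<pi>' = hd \<pi>" using ij by (simp add: \<pi>'_def hd_append)
  show "last \<pi>' = last \<pi>"
  proof (cases "j + 1 < length \<pi>")
    case True then show ?thesis by (simp add: \<pi>'_def)
  next
    case False
    then have "j = length \<pi> - 1" using ij by simp
    have "last (take (i+1) \<pi>) = \<pi>!i" using ij(1,2) by (subst last_conv_nth) (auto simp: min_def)
    moreover have "last \<pi> = \<pi>!j" using \<open>j = length \<pi> - 1\<close> ij(2) by (subst last_conv_nth) auto
    ultimately show ?thesis using ij False by (simp add: \<pi>'_def)
  qed
  show "ones \<eta> \<pi>' \<le> ones \<eta> \<pi>"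
  proof -
    have "\<pi> = take (j+1) \<pi> @ drop (j+1) \<pi>" by simp
    moreover have "take (j+1) \<pi> = take (i+1) \<pi> @ drop (i+1) (take (j+1) \<pi>)"
    proof -
      have t: "take (i+1) (take (j+1) \<pi>) = take (i+1) \<pi>" using ij(1) by (simp add: min_def)
      show ?thesis using t append_take_drop_id[of "i+1" "take (j+1) \<pi>"] by simp
    qed
    ultimately have "ones \<eta> \<pi> = ones \<eta> (take (i+1) \<pi>) + ones \<eta> (drop (i+1) (take (j+1) \<pi>)) + ones \<eta> (drop (j+1) \<pi>)"
      by (metis ones_simps(3))
    then show ?thesis using ones_nonneg[of \<eta> "drop (i+1) (take (j+1) \<pi>)"] by (simp add: \<pi>'_def)
  qed
qed




definition hmv :: "int list \<Rightarrow> int list \<times> nat \<Rightarrow> int list \<times> nat" where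
  "hmv \<delta> v = (map2 (+) (fst v) \<delta>, snd v)"
definition upm :: "nat \<Rightarrow> int list \<times> nat \<Rightarrow> int list \<times> nat" where
  "upm N v = (fst v, (snd v + 1) mod N)"
definition dnm :: "nat \<Rightarrow> int list \<times> nat \<Rightarrow> int list \<times> nat" where
  "dnm N v = (fst v, (snd v + N - 1) mod N)"
definition Delta :: "nat \<Rightarrow> int list set" where
  "Delta d = {\<delta>. set \<delta> \<subseteq> {-2..2} \<and> length \<delta> = d}"
definition Moves :: "nat \<Rightarrow> nat \<Rightarrow> (int list \<times> nat \<Rightarrow> int list \<times> nat) set" where
  "Moves d N = hmv ` Delta d \<union> {upm N, dnm N}"

lemma finite_Delta: "finite (Delta d)"
  unfolding Delta_def by (rule finite_lists_length_eq) simp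

lemma card_Delta: "card (Delta d) = 5 ^ d"
  unfolding Delta_def by (subst card_lists_length_eq) auto

lemma finite_Moves: "finite (Moves d N)"
  using finite_Delta by (simp add: Moves_def)

lemma card_Moves: "card (Moves d N) \<le> 5 ^ d + 2"
proof -
  have "card (Moves d N) \<le> card (hmv ` Delta d) + card {upm N, dnm N}"
    unfolding Moves_def by (rule card_Un_le)
  also have "card (hmv ` Delta d) \<le> 5 ^ d" using card_image_le[OF finite_Delta] card_Delta by metis
  also have "card {upm N, dnm N} \<le> 2" by (simp add: card_insert_le_m1)
  finally show ?thesis by simp
qed

lemma map2_diff: "length (x::int list) = length y \<Longrightarrow> map2 (+) x (map2 (\<lambda>a b. b - a) x y) = y"
  by (induction x y rule: list_induct2) auto

lemma adj_move:
  assumes "Xi_adj N v w" "v \<in> Xi_V d N" "w \<in> Xi_V d N"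
  shows "\<exists>f\<in>Moves d N. w = f v"
proof -
  obtain x k where v: "v = (x,k)" by (cases v)
  obtain y l where w: "w = (y,l)" by (cases w)
  have kl: "k < N" "l < N" and len: "length x = d" "length y = d"
    using assms(2,3) v w by (auto simp: Xi_V_def evenlat_def)
  from adj_cases[OF assms] v w
  have "(x = y \<and> (k = (l + 1) mod N \<or> l = (k + 1) mod N)) \<or> (k = l \<and> l1dist x y = 2)" by auto
  then show ?thesis
  proof (elim disjE conjE)
    assume xy: "x = y" and "k = (l + 1) mod N"
    then have "l = (k + N - 1) mod N"
    proof (cases "l + 1 < N")
      case True then show ?thesis using \<open>k = (l + 1) mod N\<close> by simp
    next
      case False
      then have "l + 1 = N" using kl by simp
      then show ?thesis using \<open>k = (l + 1) mod N\<close> by simp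
    qed
    then have "w = dnm N v" using xy v w by (simp add: dnm_def)
    then show ?thesis by (auto simp: Moves_def)
  next
    assume "x = y" "l = (k + 1) mod N"
    then have "w = upm N v" using v w by (simp add: upm_def)
    then show ?thesis by (auto simp: Moves_def)
  next
    assume kl': "k = l" and l1: "l1dist x y = 2"
    let ?\<delta> = "map2 (\<lambda>a b. b - a) x y"
    have "?\<delta> \<in> Delta d"
    proof -
      have "\<forall>t\<in>set ?\<delta>. t \<in> {-2..2}"
      proof
        fix t assume "t \<in> set ?\<delta>"
        then obtain a b where ab: "(a,b) \<in> set (zip x y)" "t = b - a" by auto
        then have "\<bar>a - b\<bar> \<le> 2" using l1dist_comp[OF _ ab(1)] len l1 by simp
        then show "t \<in> {-2..2}" using ab by auto
      qed
      then show ?thesis using len by (auto simp: Delta_def)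
    qed
    moreover have "w = hmv ?\<delta> v" using v w kl' len by (simp add: hmv_def map2_diff)
    ultimately show ?thesis by (auto simp: Moves_def)
  qed
qed

fun walk_of :: "('a \<Rightarrow> 'a) list \<Rightarrow> 'a \<Rightarrow> 'a list" where
  "walk_of [] v = [v]"
| "walk_of (f#fs) v = v # walk_of fs (f v)"

lemma walk_decomp:
  "\<sigma> \<noteq> [] \<Longrightarrow> set \<sigma> \<subseteq> Xi_V d N \<Longrightarrow> (\<forall>i. i + 1 < length \<sigma> \<longrightarrow> Xi_adj N (\<sigma>!i) (\<sigma>!(i+1)))
   \<Longrightarrow> \<exists>fs. set fs \<subseteq> Moves d N \<and> length fs = length \<sigma> - 1 \<and> \<sigma> = walk_of fs (hd \<sigma>)"
proof (induction \<sigma>)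
  case Nil then show ?case by simp
next
  case (Cons v \<sigma>)
  show ?case
  proof (cases "\<sigma> = []")
    case True then show ?thesis by (intro exI[of _ "[]"]) simp
  next
    case False
    have adj: "\<forall>i. i + 1 < length \<sigma> \<longrightarrow> Xi_adj N (\<sigma>!i) (\<sigma>!(i+1))"
    proof (intro allI impI)
      fix i assume "i + 1 < length \<sigma>"
      then show "Xi_adj N (\<sigma>!i) (\<sigma>!(i+1))" using Cons.prems(3)[rule_format, of "Suc i"] by simp
    qed
    obtain fs where fs: "set fs \<subseteq> Moves d N" "length fs = length \<sigma> - 1" "\<sigma> = walk_of fs (hd \<sigma>)"
      using Cons.IH[OF False _ adj] Cons.prems(2) by auto
    have "Xi_adj N v (hd \<sigma>)" using Cons.prems(3)[rule_format, of 0] False by (simp add: hd_conv_nth)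
    moreover have "v \<in> Xi_V d N" "hd \<sigma> \<in> Xi_V d N" using Cons.prems(2) False by auto
    ultimately obtain f where f: "f \<in> Moves d N" "hd \<sigma> = f v" using adj_move by metis
    show ?thesis
      by (rule exI[of _ "f#fs"]) (use fs f False in auto)
  qed
qed

definition Walks :: "nat \<Rightarrow> nat \<Rightarrow> nat \<Rightarrow> (int list \<times> nat) list set" where
  "Walks d N m = {\<sigma>. length \<sigma> = m \<and> set \<sigma> \<subseteq> Xi_V d N
     \<and> (\<forall>i. i + 1 < length \<sigma> \<longrightarrow> Xi_adj N (\<sigma>!i) (\<sigma>!(i+1)))
     \<and> (m > 0 \<longrightarrow> hd \<sigma> = (replicate d 0, 0))}"

lemma Walks_sub: "Walks d N (Suc n) \<subseteq> (\<lambda>fs. walk_of fs (replicate d 0, 0)) ` {fs. set fs \<subseteq> Moves d N \<and> length fs = n}"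
proof
  fix \<sigma> assume s: "\<sigma> \<in> Walks d N (Suc n)"
  have s1: "length \<sigma> = Suc n" "set \<sigma> \<subseteq> Xi_V d N"
     "\<forall>i. i + 1 < length \<sigma> \<longrightarrow> Xi_adj N (\<sigma>!i) (\<sigma>!(i+1))" "hd \<sigma> = (replicate d 0, 0)"
    using s unfolding Walks_def by auto
  then have ne: "\<sigma> \<noteq> []" by auto
  obtain fs where fs: "set fs \<subseteq> Moves d N" "length fs = length \<sigma> - 1" "\<sigma> = walk_of fs (hd \<sigma>)"
    using walk_decomp[OF ne s1(2) s1(3)] by blast
  have "fs \<in> {fs. set fs \<subseteq> Moves d N \<and> length fs = n}" using fs s1 by simp
  moreover have "\<sigma> = walk_of fs (replicate d 0, 0)" using fs(3) s1(4) by simp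
  ultimately show "\<sigma> \<in> (\<lambda>fs. walk_of fs (replicate d 0, 0)) ` {fs. set fs \<subseteq> Moves d N \<and> length fs = n}"
    by (rule rev_image_eqI)
qed

lemma Walks_finite_card: "finite (Walks d N m) \<and> card (Walks d N m) \<le> (5 ^ d + 2) ^ m"
proof (cases m)
  case 0
  then have "Walks d N m \<subseteq> {[]}" by (auto simp: Walks_def)
  moreover have "finite {[]::(int list \<times> nat) list}" by simp
  ultimately have "finite (Walks d N m)" "card (Walks d N m) \<le> card {[]::(int list \<times> nat) list}"
    using finite_subset card_mono by blast+
  moreover have "(5^d+2::nat)^m = 1" using \<open>m = 0\<close> by (simp only: power_0)
  ultimately show ?thesis by (simp only: card_1_singleton_iff is_singleton_altdef) auto
next
  case (Suc n)
  let ?L = "{fs. set fs \<subseteq> Moves d N \<and> length fs = n}"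
  have fL: "finite ?L" using finite_Moves by (rule finite_lists_length_eq)
  have cL: "card ?L \<le> (5 ^ d + 2) ^ n"
    using card_lists_length_eq[OF finite_Moves] card_Moves by (simp add: power_mono)
  have fin: "finite (Walks d N m)" unfolding Suc by (rule finite_subset[OF Walks_sub finite_imageI[OF fL]])
  have "card (Walks d N m) \<le> card ((\<lambda>fs. walk_of fs (replicate d 0, 0)) ` ?L)"
    unfolding Suc by (rule card_mono[OF finite_imageI[OF fL] Walks_sub])
  also have "\<dots> \<le> card ?L" using fL by (rule card_image_le)
  also have "\<dots> \<le> (5 ^ d + 2) ^ n" using cL .
  also have "\<dots> \<le> (5 ^ d + 2) ^ m" using Suc by (intro power_increasing) auto
  finally show ?thesis using fin by simp
qed




lemma pt_less:
  assumes "x \<in> evenlat d" "N \<ge> 1"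
  shows "passage_time d N \<eta> x < c \<longleftrightarrow>
    (\<exists>\<pi>. Xi_path d N \<pi> \<and> hd \<pi> = (replicate d 0, 0) \<and> last \<pi> = (x, 0) \<and> ones \<eta> \<pi> < c)"
proof -
  let ?S = "{sum_list (map (\<lambda>i. if \<eta> i then 1 else 0::real) \<pi>) | \<pi>.
      Xi_path d N \<pi> \<and> hd \<pi> = (replicate d 0, 0) \<and> last \<pi> = (x, 0)}"
  have ne: "?S \<noteq> {}" using path_exists[OF assms] by blast
  have bd: "bdd_below ?S" by (rule bdd_belowI[of _ 0]) (use ones_nonneg[of \<eta>] in \<open>auto simp: ones_def\<close>)
  show ?thesis unfolding passage_time_def cInf_less_iff[OF ne bd] ones_def by blast
qed

context
  fixes d N :: nat and p :: real
  assumes p: "0 \<le> p" "p \<le> 1"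
begin

abbreviation "MM \<equiv> config_measure d N p"

interpretation PP: product_prob_space "\<lambda>_. measure_pmf (bernoulli_pmf p)" "Xi_V d N"
  by unfold_locales

lemma comp_meas: "a \<in> Xi_V d N \<Longrightarrow> (\<lambda>\<eta>. if \<eta> a then 1 else 0 :: real) \<in> borel_measurable MM"
proof -
  assume a: "a \<in> Xi_V d N"
  have "(\<lambda>\<eta>. \<eta> a) \<in> measurable MM (measure_pmf (bernoulli_pmf p))"
    unfolding config_measure_def using a by (rule measurable_component_singleton)
  then have m: "(\<lambda>\<eta>. \<eta> a) \<in> measurable MM (count_space UNIV)"
    by (simp add: measurable_cong_sets)
  show ?thesis by (rule measurable_compose[OF m]) simp
qed

lemma ones_meas: "set \<pi> \<subseteq> Xi_V d N \<Longrightarrow> (\<lambda>\<eta>. ones \<eta> \<pi>) \<in> borel_measurable MM"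
proof (induction \<pi>)
  case Nil then show ?case by simp
next
  case (Cons a \<pi>)
  then have "(\<lambda>\<eta>. (if \<eta> a then 1 else 0) + ones \<eta> \<pi>) \<in> borel_measurable MM"
    using comp_meas by (intro borel_measurable_add) auto
  then show ?case by simp
qed

lemma Z_sets: "S \<subseteq> Xi_V d N \<Longrightarrow> finite S \<Longrightarrow> {\<eta> \<in> space MM. \<forall>i\<in>S. \<eta> i \<in> {False}} \<in> sets MM"
  unfolding config_measure_def
  by (intro sets.sets_Collect_finite_All) (auto intro!: sets_Collect_single')

lemma Z_measure: "S \<subseteq> Xi_V d N \<Longrightarrow> finite S \<Longrightarrow> measure MM {\<eta> \<in> space MM. \<forall>i\<in>S. \<eta> i \<in> {False}} = (1 - p) ^ card S"
proof -
  assume S: "S \<subseteq> Xi_V d N" "finite S"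
  have "emeasure MM {\<eta> \<in> space MM. \<forall>i\<in>S. \<eta> i \<in> {False}} = (\<Prod>i\<in>S. emeasure (measure_pmf (bernoulli_pmf p)) {False})"
    unfolding config_measure_def using S by (intro PP.emeasure_PiM_Collect) auto
  also have "\<dots> = (\<Prod>i\<in>S. ennreal (1 - p))" using p by (simp add: emeasure_pmf_single)
  also have "\<dots> = ennreal ((1 - p) ^ card S)" using p by (simp add: prod_ennreal[symmetric] ennreal_power)
  finally show ?thesis using p by (simp add: measure_def)
qed

end



lemma arith_bound:
  fixes D q :: real and m :: nat
  assumes D: "D \<ge> 1" and q: "0 \<le> q" "q \<le> 1 / (16 * D^2)"
  shows "D^m * 2^m * q^(m div 2) \<le> 4 * D * (1/2)^m"
proof -
  let ?r = "m div 2"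
  obtain e where e: "m = 2 * ?r + e" "e \<le> 1" by (metis div_mult_mod_eq mult.commute mod_less_eq_dividend
     le_less_trans less_Suc_eq_le mod_less_divisor numeral_2_eq_2 zero_less_numeral Suc_1 add.commute)
  have k: "1 / (16 * D^2) = (1 / (4 * D))^2" by (simp add: power2_eq_square field_simps)
  have "q ^ ?r \<le> (1 / (16 * D^2)) ^ ?r" using q by (intro power_mono) auto
  also have "\<dots> = (1 / (4 * D)) ^ (2 * ?r)" by (simp add: k power_mult)
  finally have qr: "q ^ ?r \<le> (1 / (4 * D)) ^ (2 * ?r)" .
  have "D^m * 2^m * q^?r = (2 * D)^m * q^?r" by (simp add: power_mult_distrib)
  also have "\<dots> \<le> (2 * D)^m * (1 / (4 * D)) ^ (2 * ?r)" using qr D by (intro mult_left_mono) auto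
  also have "\<dots> = (2 * D)^e * ((2 * D) * (1 / (4 * D))) ^ (2 * ?r)"
  proof -
    have "(2*D)^m = (2*D)^e * (2*D)^(2*?r)" by (subst e(1)) (simp add: power_add)
    moreover have "((2 * D) * (1 / (4 * D))) ^ (2 * ?r) = (2*D)^(2*?r) * (1 / (4 * D)) ^ (2 * ?r)"
      by (rule power_mult_distrib)
    ultimately show ?thesis by (simp only: mult.assoc)
  qed
  also have "(2 * D) * (1 / (4 * D)) = 1/2" using D by (simp add: field_simps)
  also have "(2 * D)^e * (1/2) ^ (2 * ?r) \<le> 4 * D * (1/2)^m"
  proof (cases "e = 0")
    case True then show ?thesis using e D by simp
  next
    case False then have e1: "e = 1" using e by simp
    have h: "(1/2::real)^m = (1/2)^(2*?r + e)" by (rule arg_cong[OF e(1)])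
    have "(2 * D)^e * (1/2) ^ (2 * ?r) = 4 * D * ((1/2)^(2*?r) * (1/2))" using e1 by simp
    also have "\<dots> = 4 * D * (1/2)^m" using h e1 by (simp add: power_add)
    finally show ?thesis by simp
  qed
  finally show ?thesis .
qed

lemma half_pow_exp:
  fixes m :: nat and t :: real
  assumes "t \<le> 2 * real m" "0 \<le> t"
  shows "(1/2::real)^m \<le> exp (- (ln 2 / 2) * t)"
proof -
  have "(1/2::real)^m = exp (- ln 2) ^ m" by (simp add: exp_minus)
  also have "\<dots> = exp (real m * (- ln 2))" by (rule exp_of_nat_mult[symmetric])
  also have "\<dots> \<le> exp (- (ln 2 / 2) * t)" using assms by (simp add: mult_left_mono)
  finally show ?thesis .
qed

context
  fixes d N :: nat and p :: real
  assumes p: "0 \<le> p" "p \<le> 1"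
begin

interpretation PP: product_prob_space "\<lambda>_. measure_pmf (bernoulli_pmf p)" "Xi_V d N"
  by unfold_locales

lemma MM_prob: "prob_space (config_measure d N p)"
  unfolding config_measure_def by (rule prob_space_PiM) (rule prob_space_measure_pmf)

lemma event_sets:
  assumes x: "x \<in> evenlat d" and N: "N \<ge> 1"
  shows "{\<eta> \<in> space (config_measure d N p). passage_time d N \<eta> x < c} \<in> sets (config_measure d N p)"
proof -
  let ?M = "config_measure d N p"
  let ?P = "{\<pi>. Xi_path d N \<pi> \<and> hd \<pi> = (replicate d 0, 0) \<and> last \<pi> = (x, 0)}"
  have eq: "{\<eta> \<in> space ?M. passage_time d N \<eta> x < c} = {\<eta> \<in> space ?M. \<exists>\<pi>\<in>?P. ones \<eta> \<pi> < c}"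
    using pt_less[OF x N] by auto
  have "{\<eta> \<in> space ?M. ones \<eta> \<pi> < c} \<in> sets ?M" if "\<pi> \<in> ?P" for \<pi>
  proof -
    have "set \<pi> \<subseteq> Xi_V d N" using that by (simp add: Xi_path_def)
    then have f: "(\<lambda>\<eta>. ones \<eta> \<pi>) \<in> borel_measurable ?M" using ones_meas[OF p] by blast
    have "(\<lambda>\<eta>. ones \<eta> \<pi>) -` {..<c} \<inter> space ?M \<in> sets ?M"
      by (rule measurable_sets[OF f]) simp
    moreover have "(\<lambda>\<eta>. ones \<eta> \<pi>) -` {..<c} \<inter> space ?M = {\<eta> \<in> space ?M. ones \<eta> \<pi> < c}" by auto
    ultimately show ?thesis by simp
  qed
  moreover have "countable ?P" by (rule countable_subset[OF subset_UNIV countableI_type])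
  ultimately show ?thesis unfolding eq by (intro sets.sets_Collect_countable_Ex') auto
qed

end



context
  fixes d N :: nat and p :: real
  assumes p: "0 \<le> p" "p \<le> 1"
begin

lemma event_bound:
  assumes x: "x \<in> evenlat d" and N: "N \<ge> 1" and q: "1 - p \<le> 1 / (16 * (5^d + 2)^2)"
  shows "measure (config_measure d N p)
          {\<eta> \<in> space (config_measure d N p). passage_time d N \<eta> x < 1/4 * eucl_norm x}
          \<le> 4 * (5^d + 2) * exp (- (ln 2 / 2) * eucl_norm x)"
proof -
  let ?M = "config_measure d N p"
  define D :: real where "D = 5^d + 2"
  define c where "c = 1/4 * eucl_norm x"
  interpret MP: prob_space ?M by (rule MM_prob[OF p])
  have "even (l1n x)" using x even_l1n by (simp add: evenlat_def)
  then obtain k where k: "l1n x = 2 * k" by (meson dvdE)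
  have "k \<ge> 0" using k l1n_nonneg[of x] by simp
  define m where "m = nat k"
  have lm: "l1n x = 2 * int m" using k \<open>k \<ge> 0\<close> by (simp add: m_def)
  define r where "r = m div 2"
  define W where "W = Walks d N m"
  define Sf where "Sf \<sigma> = {S. S \<subseteq> set \<sigma> \<and> card S = r}" for \<sigma> :: "(int list \<times> nat) list"
  define Z where "Z S = {\<eta> \<in> space ?M. \<forall>i\<in>S. \<eta> i \<in> {False}}" for S
  have eucl_m: "eucl_norm x \<le> 2 * real m" using eucl_le_l1[of x] lm by simp
  have c_le: "c \<le> real m / 2" using eucl_m by (simp add: c_def)
  have r_le: "real r \<le> real m / 2"
  proof -
    have "2 * r \<le> m" by (simp add: r_def)
    then show ?thesis by linarith
  qed
  have incl: "{\<eta> \<in> space ?M. passage_time d N \<eta> x < c} \<subseteq> (\<Union>\<sigma>\<in>W. \<Union>S\<in>Sf \<sigma>. Z S)"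
  proof
    fix \<eta> assume "\<eta> \<in> {\<eta> \<in> space ?M. passage_time d N \<eta> x < c}"
    then have sp: "\<eta> \<in> space ?M" and lt: "passage_time d N \<eta> x < c" by auto
    define Q where "Q n = (\<exists>\<pi>. Xi_path d N \<pi> \<and> hd \<pi> = (replicate d 0, 0) \<and> last \<pi> = (x, 0)
       \<and> ones \<eta> \<pi> < c \<and> length \<pi> = n)" for n
    obtain \<pi> where "Xi_path d N \<pi> \<and> hd \<pi> = (replicate d 0, 0) \<and> last \<pi> = (x, 0) \<and> ones \<eta> \<pi> < c"
      using lt pt_less[OF x N] by blast
    then have "Q (length \<pi>)" by (auto simp: Q_def)
    then have "Q (LEAST n. Q n)" by (rule LeastI)
    then obtain \<pi>0 where p0: "Xi_path d N \<pi>0" "hd \<pi>0 = (replicate d 0, 0)" "last \<pi>0 = (x, 0)"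
       "ones \<eta> \<pi>0 < c" "length \<pi>0 = (LEAST n. Q n)" unfolding Q_def by blast
    have dist: "distinct \<pi>0"
    proof (rule ccontr)
      assume "\<not> distinct \<pi>0"
      then obtain i j where ij0: "i < length \<pi>0" "j < length \<pi>0" "i \<noteq> j" "\<pi>0!i = \<pi>0!j"
        by (auto simp: distinct_conv_nth)
      obtain a b where ab: "a < b" "b < length \<pi>0" "\<pi>0!a = \<pi>0!b"
      proof (cases "i < j")
        case True then show ?thesis using that ij0 by blast
      next
        case False then show ?thesis using that[of j i] ij0 by auto
      qed
      define \<pi>' where "\<pi>' = take (a+1) \<pi>0 @ drop (b+1) \<pi>0"
      have cl: "Xi_path d N \<pi>' \<and> hd \<pi>' = hd \<pi>0 \<and> last \<pi>' = last \<pi>0 \<and> ones \<eta> \<pi>' \<le> ones \<eta> \<pi>0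
        \<and> length \<pi>' < length \<pi>0" unfolding \<pi>'_def by (rule cut_loop[OF p0(1) ab])
      then have "Q (length \<pi>')" using p0 unfolding Q_def by force
      moreover have "length \<pi>' < (LEAST n. Q n)" using cl p0(5) by simp
      ultimately show False using not_less_Least by blast
    qed
    have "l1n x \<le> 2 * (int (length \<pi>0) - 1)" by (rule path_length_bound[OF p0(1-3)])
    then have mlen: "m < length \<pi>0" using lm by simp
    define \<sigma> where "\<sigma> = take m \<pi>0"
    have pth: "set \<pi>0 \<subseteq> Xi_V d N" "\<forall>i. i + 1 < length \<pi>0 \<longrightarrow> Xi_adj N (\<pi>0!i) (\<pi>0!(i+1))"
      using p0(1) by (auto simp: Xi_path_def)
    have lens: "length \<sigma> = m" using mlen by (simp add: \<sigma>_def)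
    have "\<sigma> \<in> W" unfolding W_def Walks_def
    proof (intro CollectI conjI allI impI)
      show "length \<sigma> = m" by (rule lens)
      show "set \<sigma> \<subseteq> Xi_V d N" using pth(1) set_take_subset[of m \<pi>0] by (auto simp: \<sigma>_def)
      fix i assume "i + 1 < length \<sigma>"
      then show "Xi_adj N (\<sigma> ! i) (\<sigma> ! (i + 1))" using pth(2) lens mlen by (simp add: \<sigma>_def)
    next
      assume "0 < m"
      then show "hd \<sigma> = (replicate d 0, 0)" using p0(2) mlen by (simp add: \<sigma>_def hd_conv_nth)
    qed
    have dsig: "distinct \<sigma>" using dist by (simp add: \<sigma>_def)
    have oc: "ones \<eta> \<sigma> < c" using ones_take[of \<eta> m \<pi>0] p0(4) by (simp add: \<sigma>_def)
    let ?Zs = "{v \<in> set \<sigma>. \<not> \<eta> v}"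
    have "ones \<eta> \<sigma> + real (card ?Zs) = real m" using ones_card[OF dsig] lens by simp
    then have "real r \<le> real (card ?Zs)" using oc c_le r_le by linarith
    then have "r \<le> card ?Zs" by simp
    then obtain S where S: "S \<subseteq> ?Zs" "card S = r" by (meson obtain_subset_with_card_n)
    have "S \<in> Sf \<sigma>" using S by (auto simp: Sf_def)
    moreover have "\<eta> \<in> Z S" using S sp by (auto simp: Z_def)
    ultimately show "\<eta> \<in> (\<Union>\<sigma>\<in>W. \<Union>S\<in>Sf \<sigma>. Z S)" using \<open>\<sigma> \<in> W\<close> by blast
  qed
  have fW: "finite W" and cW: "card W \<le> (5^d+2)^m" using Walks_finite_card unfolding W_def by auto
  have Wp: "set \<sigma> \<subseteq> Xi_V d N" "length \<sigma> = m" if "\<sigma> \<in> W" for \<sigma>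
    using that by (auto simp: W_def Walks_def)
  have fSf: "finite (Sf \<sigma>)" for \<sigma>
    by (rule finite_subset[of _ "Pow (set \<sigma>)"]) (auto simp: Sf_def)
  have cSf: "card (Sf \<sigma>) \<le> 2^m" if "\<sigma> \<in> W" for \<sigma>
  proof -
    have "card (Sf \<sigma>) \<le> card (Pow (set \<sigma>))" by (rule card_mono) (auto simp: Sf_def)
    also have "\<dots> = 2 ^ card (set \<sigma>)" by (simp add: card_Pow)
    also have "\<dots> \<le> 2 ^ m" using card_length[of \<sigma>] Wp[OF that] by (intro power_increasing) auto
    finally show ?thesis .
  qed
  have Sp: "S \<subseteq> Xi_V d N" "finite S" "card S = r" if "\<sigma> \<in> W" "S \<in> Sf \<sigma>" for \<sigma> S
    using that Wp[OF that(1)] by (auto simp: Sf_def intro: finite_subset)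
  have Zs: "Z S \<in> sets ?M" if "\<sigma> \<in> W" "S \<in> Sf \<sigma>" for \<sigma> S
    unfolding Z_def by (rule Z_sets[OF p Sp(1,2)[OF that]])
  have Zm: "measure ?M (Z S) = (1 - p)^r" if "\<sigma> \<in> W" "S \<in> Sf \<sigma>" for \<sigma> S
    unfolding Z_def using Z_measure[OF p Sp(1,2)[OF that]] Sp(3)[OF that] by simp
  have Us: "(\<Union>S\<in>Sf \<sigma>. Z S) \<in> sets ?M" if "\<sigma> \<in> W" for \<sigma>
    using fSf Zs that by (intro sets.finite_UN) auto
  have "measure ?M {\<eta> \<in> space ?M. passage_time d N \<eta> x < c} \<le> measure ?M (\<Union>\<sigma>\<in>W. \<Union>S\<in>Sf \<sigma>. Z S)"
    using incl by (rule MP.finite_measure_mono) (rule sets.finite_UN[OF fW Us])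
  also have "\<dots> \<le> (\<Sum>\<sigma>\<in>W. measure ?M (\<Union>S\<in>Sf \<sigma>. Z S))"
    using fW Us by (intro measure_UNION_le) auto
  also have "\<dots> \<le> (\<Sum>\<sigma>\<in>W. (\<Sum>S\<in>Sf \<sigma>. measure ?M (Z S)))"
    using fSf Zs by (intro sum_mono measure_UNION_le) auto
  also have "\<dots> = (\<Sum>\<sigma>\<in>W. real (card (Sf \<sigma>)) * (1 - p)^r)"
    using Zm by (intro sum.cong) auto
  also have "\<dots> \<le> (\<Sum>\<sigma>\<in>W. 2^m * (1 - p)^r)"
  proof (intro sum_mono mult_right_mono)
    fix \<sigma> assume "\<sigma> \<in> W"
    then have "card (Sf \<sigma>) \<le> (2::nat)^m" by (rule cSf)
    then show "real (card (Sf \<sigma>)) \<le> 2^m" by (metis of_nat_le_iff of_nat_numeral of_nat_power)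
    show "0 \<le> (1 - p)^r" using p by simp
  qed
  also have "\<dots> = real (card W) * 2^m * (1 - p)^r" by simp
  also have "\<dots> \<le> D^m * 2^m * (1 - p)^r"
  proof -
    have "real (card W) \<le> real ((5^d+2)^m)" using cW by (rule of_nat_mono)
    also have "\<dots> = D^m" by (simp add: D_def add.commute)
    finally show ?thesis using p by (intro mult_right_mono) auto
  qed
  also have "\<dots> \<le> 4 * D * (1/2)^m"
    unfolding r_def by (rule arith_bound) (use p q in \<open>auto simp: D_def\<close>)
  also have "\<dots> \<le> 4 * D * exp (- (ln 2 / 2) * eucl_norm x)"
    using half_pow_exp[OF eucl_m eucl_nonneg] by (intro mult_left_mono) (auto simp: D_def)
  finally show ?thesis by (simp add: c_def D_def)
qed

end


theorem lemma3p2: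
  fixes d :: nat
  assumes "d \<ge> 1"
  shows "\<exists>\<kappa>>0. \<forall>p::real. 1 - \<kappa> < p \<and> p \<le> 1 \<longrightarrow>
    (\<exists>\<phi>>0. \<exists>c1>0. \<exists>c2>0. \<forall>N::nat. N \<ge> 1 \<longrightarrow>
      (\<forall>x\<in>evenlat d.
        {\<eta> \<in> space (config_measure d N p). passage_time d N \<eta> x < \<phi> * eucl_norm x}
          \<in> sets (config_measure d N p) \<and>
        measure (config_measure d N p)
          {\<eta> \<in> space (config_measure d N p). passage_time d N \<eta> x < \<phi> * eucl_norm x}
          \<le> c1 * exp (- c2 * eucl_norm x)))"
proof -
  define \<kappa> :: real where "\<kappa> = 1 / (16 * (5^d + 2)^2)"
  have big: "(16::real) \<le> 16 * (5^d + 2)^2"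
  proof -
    have "(1::real) \<le> (5^d + 2)^2" by (rule one_le_power) simp
    then show ?thesis by simp
  qed
  have kpos: "\<kappa> > 0" unfolding \<kappa>_def using big by (intro divide_pos_pos) linarith+
  have kle: "\<kappa> \<le> 1" unfolding \<kappa>_def
  proof -
    have pos: "(0::real) < 16 * (5^d + 2)^2" using big by linarith
    show "1 / (16 * (5^d + 2)^2) \<le> (1::real)"
      by (subst divide_le_eq_1_pos[OF pos]) (use big in linarith)
  qed
  show ?thesis
  proof (rule exI[of _ \<kappa>], intro conjI allI impI)
    show "\<kappa> > 0" by (rule kpos)
    fix p :: real assume hp: "1 - \<kappa> < p \<and> p \<le> 1"
    then have p: "0 \<le> p" "p \<le> 1" using kle by auto
    have q: "1 - p \<le> 1 / (16 * (5^d + 2)^2)" using hp by (simp add: \<kappa>_def)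
    have main: "\<forall>N::nat. N \<ge> 1 \<longrightarrow>
      (\<forall>x\<in>evenlat d.
        {\<eta> \<in> space (config_measure d N p). passage_time d N \<eta> x < 1/4 * eucl_norm x}
          \<in> sets (config_measure d N p) \<and>
        measure (config_measure d N p)
          {\<eta> \<in> space (config_measure d N p). passage_time d N \<eta> x < 1/4 * eucl_norm x}
          \<le> (4 * (5^d + 2)) * exp (- (ln 2 / 2) * eucl_norm x))"
      using event_sets[OF p] event_bound[OF p _ _ q] by blast
    have p5: "(0::real) < 5^d" by simp
    have pos1: "(0::real) < 1/4" "(0::real) < ln 2 / 2" by auto
    have pos2: "(0::real) < 4 * (5^d + 2)" by (intro mult_pos_pos add_pos_pos) simp_all
    note pos = pos1 pos2
    show "\<exists>\<phi>>0. \<exists>c1>0. \<exists>c2>0. \<forall>N::nat. N \<ge> 1 \<longrightarrow>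
      (\<forall>x\<in>evenlat d.
        {\<eta> \<in> space (config_measure d N p). passage_time d N \<eta> x < \<phi> * eucl_norm x}
          \<in> sets (config_measure d N p) \<and>
        measure (config_measure d N p)
          {\<eta> \<in> space (config_measure d N p). passage_time d N \<eta> x < \<phi> * eucl_norm x}
          \<le> c1 * exp (- c2 * eucl_norm x))"
      using main pos by blast
  qed
qed

end
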